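(* Let $F$ be as in the context and have a Jacobi inequality with function $b(M,p)$. Let $u\in C^\infty(\overline{B_1(0)})$ be a smooth solution of $F(D^2u,Du)=0$ in $B_1(0)$, and set $b(x):=b(D^2u(x),Du(x))$. Let $a_i<b_i$ ($1\le i\le n$) with $B=\{a_i\le x_i\le b_i\}\subset B_1(0)$, let $0<r<b_1-a_1$, and let $B'=\{x: a_1\le x_1\le b_1-r,\ a_i\le x_i\le b_i \text{ for } i\ge 2\}$. Let $L^0$ be the relative interior of the side $\{x_1=a_1\}\cap B'$ and $R:=\partial B'\setminus L^0$. Define $\eta(x_1)=\frac{1}{b_1-x_1}-\frac{1}{b_1-a_1}$. Then $$\sup_{B'}\eta(x_1)\,b(x)=\sup_{\partial B'}\eta(x_1)\,b(x)\le r^{-1}\sup_{R} b(x).$$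
   Context: Let $F:\mathrm{Sym}(n;\mathbb R)\times\mathbb R^n\to\mathbb R$ be Lipschitz and (degenerate) elliptic: $F(M+P,p)\ge F(M,p)$ for all positive definite $P$, and smooth and strictly elliptic along every smooth solution, i.e. for every smooth solution $u$ of $F(D^2u,Du)=0$ and every $x$, $F$ is smooth near $(D^2u(x),Du(x))$ and $\partial F/\partial M(D^2u(x),Du(x))>0$. The equation **has a Jacobi inequality** if there is a positive Lipschitz function $b(M,p)$ such that for every smooth solution $u$, the function $b(x):=b(D^2u(x),Du(x))$ satisfies, in the viscosity sense, $F^{ij}b_{ij}\ge 2F^{ij}b_ib_j/b$, where $F^{ij}=\frac{\partial F}{\partial M_{ij}}(D^2u,Du)$ and $b_i=\partial_{x_i}b$ (together with higher-derivative bounds not needed here). *)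

theory Defs
  imports "HOL-Analysis.Analysis"
begin

primrec Ck_on :: "nat \<Rightarrow> 'a::euclidean_space set \<Rightarrow> ('a \<Rightarrow> 'b::real_normed_vector) \<Rightarrow> bool" where
  "Ck_on 0 U f = continuous_on U f"
| "Ck_on (Suc k) U f =
     (f differentiable_on U \<and> (\<forall>v. Ck_on k U (\<lambda>x. frechet_derivative f (at x) v)))"

definition Cinf_on :: "'a::euclidean_space set \<Rightarrow> ('a \<Rightarrow> 'b::real_normed_vector) \<Rightarrow> bool" where
  "Cinf_on U f \<longleftrightarrow> (\<forall>k. Ck_on k U f)"

definition grad :: "(real^'n \<Rightarrow> real) \<Rightarrow> real^'n \<Rightarrow> real^'n" where
  "grad f x = (\<chi> i. frechet_derivative f (at x) (axis i 1))"

definition hess :: "(real^'n \<Rightarrow> real) \<Rightarrow> real^'n \<Rightarrow> real^'n^'n" where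
  "hess f x = (\<chi> i j. frechet_derivative (\<lambda>y. frechet_derivative f (at y) (axis j 1)) (at x) (axis i 1))"

definition sym_mat :: "real^'n^'n \<Rightarrow> bool" where
  "sym_mat M \<longleftrightarrow> transpose M = M"

definition posdef :: "real^'n^'n \<Rightarrow> bool" where
  "posdef A \<longleftrightarrow> (\<forall>\<xi>. \<xi> \<noteq> 0 \<longrightarrow> \<xi> \<bullet> (A *v \<xi>) > 0)"

definition symm_part :: "real^'n^'n \<Rightarrow> real^'n^'n" where
  "symm_part M = (1/2) *\<^sub>R (M + transpose M)"

definition Emat :: "'n \<Rightarrow> 'n \<Rightarrow> real^'n^'n" where
  "Emat i j = (\<chi> k l. if k = i \<and> l = j then 1 else 0)"

text \<open>F is defined on Sym(n) x R^n; we model it as a function on all matrices of which only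
  the values on symmetric matrices matter, and differentiate the extension
  (M,p) |-> F(sym M, p).  The matrix F^{ij} = dF/dM_{ij} (symmetric convention).\<close>
definition Fext :: "(real^'n^'n \<Rightarrow> real^'n \<Rightarrow> real) \<Rightarrow> (real^'n^'n) \<times> (real^'n) \<Rightarrow> real" where
  "Fext F z = F (symm_part (fst z)) (snd z)"

definition Fder :: "(real^'n^'n \<Rightarrow> real^'n \<Rightarrow> real) \<Rightarrow> real^'n^'n \<Rightarrow> real^'n \<Rightarrow> real^'n^'n" where
  "Fder F M p = (\<chi> i j. frechet_derivative (Fext F) (at (M, p)) (Emat i j, 0))"

definition lipschitz_Sym :: "(real^'n^'n \<Rightarrow> real^'n \<Rightarrow> real) \<Rightarrow> bool" where
  "lipschitz_Sym F \<longleftrightarrow> (\<exists>C. lipschitz_on C ({M. sym_mat M} \<times> UNIV) (\<lambda>z. F (fst z) (snd z)))"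

definition degenerate_elliptic :: "(real^'n^'n \<Rightarrow> real^'n \<Rightarrow> real) \<Rightarrow> bool" where
  "degenerate_elliptic F \<longleftrightarrow>
     (\<forall>M P p. sym_mat M \<and> sym_mat P \<and> posdef P \<longrightarrow> F (M + P) p \<ge> F M p)"

definition smooth_solution :: "(real^'n^'n \<Rightarrow> real^'n \<Rightarrow> real) \<Rightarrow> (real^'n) set \<Rightarrow> (real^'n \<Rightarrow> real) \<Rightarrow> bool" where
  "smooth_solution F \<Omega> u \<longleftrightarrow> Cinf_on \<Omega> u \<and> (\<forall>x\<in>\<Omega>. F (hess u x) (grad u x) = 0)"

definition smooth_strictly_elliptic_along_solutions :: "(real^'n^'n \<Rightarrow> real^'n \<Rightarrow> real) \<Rightarrow> bool" where
  "smooth_strictly_elliptic_along_solutions F \<longleftrightarrow>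
     (\<forall>\<Omega> u. open \<Omega> \<and> smooth_solution F \<Omega> u \<longrightarrow>
        (\<forall>x\<in>\<Omega>. (\<exists>W. open W \<and> (hess u x, grad u x) \<in> W \<and> Cinf_on W (Fext F))
               \<and> posdef (Fder F (hess u x) (grad u x))))"

definition jacobi_visc :: "(real^'n \<Rightarrow> real^'n^'n) \<Rightarrow> (real^'n \<Rightarrow> real) \<Rightarrow> (real^'n) set \<Rightarrow> bool" where
  "jacobi_visc A bx \<Omega> \<longleftrightarrow>
     (\<forall>x0\<in>\<Omega>. \<forall>N \<phi>. open N \<and> x0 \<in> N \<and> N \<subseteq> \<Omega> \<and> Ck_on 2 N \<phi> \<and>
        (\<forall>x\<in>N. bx x \<le> \<phi> x) \<and> \<phi> x0 = bx x0 \<longrightarrow>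
        (\<Sum>i\<in>UNIV. \<Sum>j\<in>UNIV. A x0 $ i $ j * hess \<phi> x0 $ i $ j)
          \<ge> 2 * (\<Sum>i\<in>UNIV. \<Sum>j\<in>UNIV. A x0 $ i $ j * grad \<phi> x0 $ i * grad \<phi> x0 $ j) / bx x0)"

definition has_jacobi_inequality ::
  "(real^'n^'n \<Rightarrow> real^'n \<Rightarrow> real) \<Rightarrow> (real^'n^'n \<Rightarrow> real^'n \<Rightarrow> real) \<Rightarrow> bool" where
  "has_jacobi_inequality F b \<longleftrightarrow>
     lipschitz_Sym b \<and> (\<forall>M p. sym_mat M \<longrightarrow> b M p > 0) \<and>
     (\<forall>\<Omega> u. open \<Omega> \<and> smooth_solution F \<Omega> u \<longrightarrow>
        jacobi_visc (\<lambda>x. Fder F (hess u x) (grad u x)) (\<lambda>x. b (hess u x) (grad u x)) \<Omega>)"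

end

theory Submission
  imports Defs
begin


lemma line_deriv:
  fixes f :: "'a::real_normed_vector \<Rightarrow> real"
  assumes "(f has_derivative f') (at (x + s *\<^sub>R a))"
  shows "((\<lambda>s. f (x + s *\<^sub>R a)) has_real_derivative f' a) (at s)"
proof -
  have l: "linear f'" using assms has_derivative_linear by blast
  have "((\<lambda>s. x + s *\<^sub>R a) has_derivative (\<lambda>t. t *\<^sub>R a)) (at s)"
    by (auto intro!: derivative_eq_intros)
  from has_derivative_compose[OF this assms]
  have "((\<lambda>s. f (x + s *\<^sub>R a)) has_derivative (\<lambda>t. f' (t *\<^sub>R a))) (at s)" by (simp add: o_def)
  moreover have "(\<lambda>t. f' (t *\<^sub>R a)) = (\<lambda>t. t * f' a)"
    using l by (simp add: linear_scale)
  moreover have "(*) (f' a) = (\<lambda>t. t * f' a)" by (auto simp: fun_eq_iff)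
  ultimately show ?thesis by (simp add: has_field_derivative_def)
qed

lemma mixed_mvt:
  fixes u :: "'a::real_normed_vector \<Rightarrow> real"
  assumes sub: "ball x d \<subseteq> U" and h: "h > 0" "h * (norm a + norm b) < d"
   and du: "\<And>y. y \<in> U \<Longrightarrow> (u has_derivative Du y) (at y)"
   and dD: "\<And>y v. y \<in> U \<Longrightarrow> ((\<lambda>y. Du y v) has_derivative DD y v) (at y)"
  shows "\<exists>p. dist p x < d \<and> u (x + h *\<^sub>R a + h *\<^sub>R b) - u (x + h *\<^sub>R a) - u (x + h *\<^sub>R b) + u x = h^2 * DD p a b"
proof -
  have inU: "x + s *\<^sub>R a + t *\<^sub>R b \<in> U" "dist (x + s *\<^sub>R a + t *\<^sub>R b) x < d"
    if "0 \<le> s" "s \<le> h" "0 \<le> t" "t \<le> h" for s t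
  proof -
    have "norm (s *\<^sub>R a + t *\<^sub>R b) \<le> s * norm a + t * norm b"
      using that norm_triangle_ineq[of "s *\<^sub>R a" "t *\<^sub>R b"] by simp
    also have "\<dots> \<le> h * norm a + h * norm b"
      using that by (intro add_mono mult_right_mono) auto
    finally have "norm (s *\<^sub>R a + t *\<^sub>R b) < d" using h by (simp add: algebra_simps)
    then show "dist (x + s *\<^sub>R a + t *\<^sub>R b) x < d" by (simp add: dist_norm add.assoc)
    then show "x + s *\<^sub>R a + t *\<^sub>R b \<in> U" using sub by (auto simp: dist_commute)
  qed
  define g where "g s = u (x + s *\<^sub>R a + h *\<^sub>R b) - u (x + s *\<^sub>R a)" for s
  have "DERIV g s :> Du (x + s *\<^sub>R a + h *\<^sub>R b) a - Du (x + s *\<^sub>R a) a"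
    if "0 \<le> s" "s \<le> h" for s
  proof -
    have e1: "(x + s *\<^sub>R a + h *\<^sub>R b) = (x + h *\<^sub>R b) + s *\<^sub>R a" by (simp add: algebra_simps)
    have d1: "((\<lambda>s. u ((x + h *\<^sub>R b) + s *\<^sub>R a)) has_real_derivative Du ((x + h *\<^sub>R b) + s *\<^sub>R a) a) (at s)"
      apply (rule line_deriv[where f'="Du ((x + h *\<^sub>R b) + s *\<^sub>R a)"]) using du[OF inU(1)[OF that h(1)[THEN less_imp_le] order_refl]] by (simp only: e1)
    have d2: "((\<lambda>s. u (x + s *\<^sub>R a)) has_real_derivative Du (x + s *\<^sub>R a) a) (at s)"
      apply (rule line_deriv[where f'="Du (x + s *\<^sub>R a)"]) using du[OF inU(1)[OF that order_refl h(1)[THEN less_imp_le]]] by simp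
    have "(\<lambda>s. u ((x + h *\<^sub>R b) + s *\<^sub>R a) - u (x + s *\<^sub>R a)) = g"
      unfolding g_def by (rule ext) (simp add: add.commute add.left_commute)
    with DERIV_diff[OF d1 d2] show ?thesis unfolding e1 by simp
  qed
  from MVT2[OF h(1), of g, OF this]
  obtain s where s: "0 < s" "s < h"
    "g h - g 0 = (h - 0) * (Du (x + s *\<^sub>R a + h *\<^sub>R b) a - Du (x + s *\<^sub>R a) a)" by auto
  define k where "k t = Du (x + s *\<^sub>R a + t *\<^sub>R b) a" for t
  have "DERIV k t :> DD (x + s *\<^sub>R a + t *\<^sub>R b) a b" if "0 \<le> t" "t \<le> h" for t
    unfolding k_def
    apply (rule line_deriv[of "\<lambda>y. Du y a" "DD (x + s *\<^sub>R a + t *\<^sub>R b) a" "x + s *\<^sub>R a", simplified])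
    using dD[OF inU(1)[OF _ _ that, of s]] s by simp
  from MVT2[OF h(1), of k, OF this]
  obtain t where t: "0 < t" "t < h" "k h - k 0 = (h - 0) * DD (x + s *\<^sub>R a + t *\<^sub>R b) a b" by auto
  show ?thesis
  proof (intro exI conjI)
    show "dist (x + s *\<^sub>R a + t *\<^sub>R b) x < d" using inU(2)[of s t] s t by simp
    have "u (x + h *\<^sub>R a + h *\<^sub>R b) - u (x + h *\<^sub>R a) - u (x + h *\<^sub>R b) + u x = g h - g 0"
      unfolding g_def by simp
    also have "\<dots> = h * (k h - k 0)" using s(3) unfolding k_def by simp
    also have "\<dots> = h^2 * DD (x + s *\<^sub>R a + t *\<^sub>R b) a b" using t(3) by (simp add: power2_eq_square)
    finally show "u (x + h *\<^sub>R a + h *\<^sub>R b) - u (x + h *\<^sub>R a) - u (x + h *\<^sub>R b) + u x = h^2 * DD (x + s *\<^sub>R a + t *\<^sub>R b) a b" .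
  qed
qed

lemma schwarz:
  fixes u :: "'a::real_normed_vector \<Rightarrow> real"
  assumes U: "open U" "x \<in> U"
   and du: "\<And>y. y \<in> U \<Longrightarrow> (u has_derivative Du y) (at y)"
   and dD: "\<And>y v. y \<in> U \<Longrightarrow> ((\<lambda>y. Du y v) has_derivative DD y v) (at y)"
   and cont: "\<And>v w. continuous_on U (\<lambda>y. DD y v w)"
  shows "DD x a b = DD x b a"
proof (rule ccontr)
  assume ne: "DD x a b \<noteq> DD x b a"
  define e where "e = \<bar>DD x a b - DD x b a\<bar> / 2"
  have e: "e > 0" using ne unfolding e_def by simp
  have ct: "continuous (at x) (\<lambda>y. DD y v w)" for v w
    using cont[of v w] U by (simp add: continuous_on_eq_continuous_at)
  obtain d1 where d1: "d1 > 0" "\<And>y. dist y x < d1 \<Longrightarrow> dist (DD y a b) (DD x a b) < e"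
    using ct[of a b] e unfolding continuous_at_eps_delta by blast
  obtain d2 where d2: "d2 > 0" "\<And>y. dist y x < d2 \<Longrightarrow> dist (DD y b a) (DD x b a) < e"
    using ct[of b a] e unfolding continuous_at_eps_delta by blast
  obtain d0 where d0: "d0 > 0" "ball x d0 \<subseteq> U" using U open_contains_ball by blast
  define d where "d = min d0 (min d1 d2)"
  have d: "d > 0" "ball x d \<subseteq> U" using d0 d1 d2 unfolding d_def by auto
  define h where "h = d / (2 * (norm a + norm b + 1))"
  have hpos: "h > 0" unfolding h_def using d by (simp add: add_nonneg_pos)
  have "h * (norm a + norm b) < d"
  proof -
    have "h * (norm a + norm b) \<le> h * (norm a + norm b + 1)" using hpos by simp
    also have "\<dots> = d / 2" proof -
      have "norm a + norm b + 1 > 0" by (simp add: add_nonneg_pos)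
      then show ?thesis unfolding h_def by (simp add: field_simps)
    qed
    finally show ?thesis using d by simp
  qed
  note hh = this
  have hh': "h * (norm b + norm a) < d" using hh by (simp add: add.commute)
  obtain p where p: "dist p x < d" "u (x + h *\<^sub>R a + h *\<^sub>R b) - u (x + h *\<^sub>R a) - u (x + h *\<^sub>R b) + u x = h^2 * DD p a b"
    using mixed_mvt[OF d(2) hpos hh du dD] by blast
  obtain q where q: "dist q x < d" "u (x + h *\<^sub>R b + h *\<^sub>R a) - u (x + h *\<^sub>R b) - u (x + h *\<^sub>R a) + u x = h^2 * DD q b a"
    using mixed_mvt[OF d(2) hpos hh' du dD] by blast
  have eq: "x + h *\<^sub>R b + h *\<^sub>R a = x + h *\<^sub>R a + h *\<^sub>R b" by (simp add: algebra_simps)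
  have q2: "u (x + h *\<^sub>R a + h *\<^sub>R b) - u (x + h *\<^sub>R b) - u (x + h *\<^sub>R a) + u x = h^2 * DD q b a"
    using q(2) unfolding eq .
  have "h^2 * DD p a b = h^2 * DD q b a" using p(2) q2 by linarith
  then have pq: "DD p a b = DD q b a" using hpos by simp
  have "dist (DD p a b) (DD x a b) < e" using d1 p(1) unfolding d_def by simp
  moreover have "dist (DD q b a) (DD x b a) < e" using d2 q(1) unfolding d_def by simp
  ultimately show False using pq unfolding e_def dist_real_def by (simp add: abs_if split: if_splits)
qed

lemma Ck_on_subset: "Ck_on k U f \<Longrightarrow> S \<subseteq> U \<Longrightarrow> Ck_on k S f"
  by (induction k arbitrary: f) (auto intro: continuous_on_subset differentiable_on_subset)

lemma Ck2_unfold: "Ck_on 2 U f \<longleftrightarrow> f differentiable_on U \<and>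
   (\<forall>v. (\<lambda>x. frechet_derivative f (at x) v) differentiable_on U \<and>
      (\<forall>w. continuous_on U (\<lambda>x. frechet_derivative (\<lambda>y. frechet_derivative f (at y) v) (at x) w)))"
  by (simp add: numeral_2_eq_2)

lemma C2_facts:
  fixes u :: "'a::euclidean_space \<Rightarrow> real"
  assumes U: "open U" and C: "Ck_on 2 U u"
  shows "\<And>y. y \<in> U \<Longrightarrow> (u has_derivative frechet_derivative u (at y)) (at y)"
    and "\<And>y v. y \<in> U \<Longrightarrow> ((\<lambda>y. frechet_derivative u (at y) v) has_derivative
            frechet_derivative (\<lambda>y. frechet_derivative u (at y) v) (at y)) (at y)"
    and "\<And>v w. continuous_on U (\<lambda>x. frechet_derivative (\<lambda>y. frechet_derivative u (at y) v) (at x) w)"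
    and "\<And>v. continuous_on U (\<lambda>x. frechet_derivative u (at x) v)"
  using C U unfolding Ck2_unfold
  by (auto simp: differentiable_on_eq_differentiable_at frechet_derivative_works[symmetric]
      intro: differentiable_imp_continuous_on)

lemma hess_sym:
  fixes u :: "real^'n \<Rightarrow> real"
  assumes U: "open U" and C: "Ck_on 2 U u" and x: "x \<in> U"
  shows "sym_mat (hess u x)"
proof -
  note f = C2_facts[OF U C]
  have "frechet_derivative (\<lambda>y. frechet_derivative u (at y) a) (at x) b =
        frechet_derivative (\<lambda>y. frechet_derivative u (at y) b) (at x) a" for a b
    using schwarz[OF U x f(1) f(2) f(3), of a b] by simp
  then show ?thesis unfolding sym_mat_def hess_def transpose_def by (simp add: vec_eq_iff)
qed

lemma hess_grad_cont:
  fixes u :: "real^'n \<Rightarrow> real"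
  assumes U: "open U" and C: "Ck_on 2 U u"
  shows "continuous_on U (hess u)" "continuous_on U (grad u)"
proof -
  note f = C2_facts[OF U C]
  show "continuous_on U (hess u)" unfolding hess_def
    by (intro continuous_on_vec_lambda f(3))
  show "continuous_on U (grad u)" unfolding grad_def
    by (intro continuous_on_vec_lambda f(4))
qed

lemma posdef_diag: "posdef A \<Longrightarrow> A $ k $ k > 0"
proof -
  assume "posdef A"
  then have "axis k 1 \<bullet> (A *v axis k (1::real)) > 0"
    unfolding posdef_def by (metis axis_nth zero_neq_one zero_index)
  then show ?thesis by (simp add: inner_axis' matrix_vector_mult_basis column_def)
qed

lemma nth_has_derivative: "((\<lambda>x::real^'n::finite. x $ k) has_derivative (\<lambda>h. h $ k)) F"
  by (rule bounded_linear_imp_has_derivative) (rule bounded_linear_vec_nth)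

lemma quad_deriv1:
  "((\<lambda>x::real^'n::finite. al + be * (x $ k - t0) + ga * ((x $ k - t0) * (x $ k - t0))) has_derivative
     (\<lambda>h. (be + 2 * ga * (x $ k - t0)) * h $ k)) (at x)"
proof -
  have "((\<lambda>x::real^'n::finite. al + be * (x $ k - t0) + ga * ((x $ k - t0) * (x $ k - t0))) has_derivative
     (\<lambda>h. 0 + be * (h $ k - 0) + ga * ((x $ k - t0) * (h $ k - 0) + (h $ k - 0) * (x $ k - t0)))) (at x)"
    by (intro has_derivative_add has_derivative_const has_derivative_mult_right has_derivative_mult has_derivative_diff nth_has_derivative)
  then show ?thesis by (rule has_derivative_eq_rhs) (simp add: fun_eq_iff algebra_simps)
qed

lemma quad_deriv2:
  "((\<lambda>x::real^'n::finite. (be + 2 * ga * (x $ k - t0)) * v $ k) has_derivative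
     (\<lambda>h. 2 * ga * v $ k * h $ k)) (at x)"
proof -
  have "((\<lambda>x::real^'n::finite. (be + 2 * ga * (x $ k - t0)) * v $ k) has_derivative
     (\<lambda>h. (0 + 2 * ga * (h $ k - 0)) * v $ k)) (at x)"
    by (intro has_derivative_add has_derivative_const has_derivative_mult_right has_derivative_mult_left has_derivative_diff nth_has_derivative)
  then show ?thesis by (rule has_derivative_eq_rhs) (simp add: fun_eq_iff algebra_simps)
qed

lemma quad_facts:
  fixes k :: "'n::finite" and al be ga t0 :: real
  defines "\<phi> \<equiv> (\<lambda>x::real^'n::finite. al + be * (x $ k - t0) + ga * ((x $ k - t0) * (x $ k - t0)))"
  shows "Ck_on 2 N \<phi>"
    "grad \<phi> x = (\<chi> i. if i = k then be + 2 * ga * (x $ k - t0) else 0)"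
    "hess \<phi> x = (\<chi> i j. if i = k \<and> j = k then 2 * ga else 0)"
proof -
  have fd1: "frechet_derivative \<phi> (at y) = (\<lambda>h. (be + 2 * ga * (y $ k - t0)) * h $ k)" for y
    unfolding \<phi>_def by (rule frechet_derivative_at[OF quad_deriv1, symmetric])
  have fd1': "(\<lambda>y. frechet_derivative \<phi> (at y) v) = (\<lambda>y. (be + 2 * ga * (y $ k - t0)) * v $ k)" for v
    using fd1 by simp
  have fd2: "frechet_derivative (\<lambda>y. frechet_derivative \<phi> (at y) v) (at y) = (\<lambda>h. 2 * ga * v $ k * h $ k)" for v y
    unfolding fd1' by (rule frechet_derivative_at[OF quad_deriv2, symmetric])
  show "Ck_on 2 N \<phi>" unfolding Ck2_unfold fd2
  proof (intro conjI allI)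
    show "\<phi> differentiable_on N" unfolding \<phi>_def differentiable_on_def differentiable_def
      using has_derivative_at_withinI[OF quad_deriv1] by blast
    fix v
    show "(\<lambda>x. frechet_derivative \<phi> (at x) v) differentiable_on N"
      unfolding fd1' differentiable_on_def differentiable_def
      using has_derivative_at_withinI[OF quad_deriv2] by blast
  qed simp
  show "grad \<phi> x = (\<chi> i. if i = k then be + 2 * ga * (x $ k - t0) else 0)"
    unfolding grad_def fd1 by (simp add: vec_eq_iff axis_def)
  show "hess \<phi> x = (\<chi> i j. if i = k \<and> j = k then 2 * ga else 0)"
    unfolding hess_def fd2 by (simp add: vec_eq_iff axis_def)
qed



lemma key1:
  fixes s0 dd mm s :: real
  assumes "0 < s0" "s0 < dd" "mm > 0" "0 < s" "2*dd* s0 \<le> (2*dd+s0)* s"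
  shows "mm*dd*(dd-s)/s \<le> mm*dd*(dd-s0)/s0 + (-(mm*dd*dd/(s0* s0)))*(s-s0) + ((2*dd+s0)*mm*dd/(2* s0^3))*((s-s0)*(s-s0))"
proof -
  have "mm*dd*(dd-s0)/s0 + (-(mm*dd*dd/(s0* s0)))*(s-s0) + ((2*dd+s0)*mm*dd/(2* s0^3))*((s-s0)*(s-s0)) - mm*dd*(dd-s)/s
        = mm*dd*((s-s0)*(s-s0))*((2*dd+s0) * s - 2*dd * s0)/(2* s0^3* s)"
    using assms by (simp add: field_simps power3_eq_cube)
  also have "\<dots> \<ge> 0"
  proof -
    have "(2*dd+s0) * s - 2*dd * s0 \<ge> 0" using assms(5) by simp
    moreover have "(s-s0)*(s-s0) \<ge> 0" by simp
    moreover have "mm*dd \<ge> 0" using assms by simp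
    moreover have "2 * s0^3 * s > 0" using assms by simp
    ultimately show ?thesis by (meson divide_nonneg_pos mult_nonneg_nonneg)
  qed
  finally show ?thesis by simp
qed

lemma key2:
  fixes s0 dd mm :: real
  assumes "0 < s0" "s0 < dd" "mm > 0"
  shows "((2*dd+s0)*mm*dd/(2* s0^3)) * (mm*dd*(dd-s0)/s0) < (-(mm*dd*dd/(s0* s0)))^2"
proof -
  have "((2*dd+s0)*mm*dd/(2* s0^3)) * (mm*dd*(dd-s0)/s0) = (mm*mm*dd*dd/(s0 * s0 * s0 * s0)) * ((2*dd+s0)*(dd-s0)/2)"
    using assms by (simp add: field_simps power3_eq_cube)
  also have "\<dots> < (mm*mm*dd*dd/(s0 * s0 * s0 * s0)) * (dd*dd)"
    using assms by (intro mult_strict_left_mono) (auto simp: algebra_simps intro!: add_pos_pos mult_pos_pos)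
  also have "\<dots> = (-(mm*dd*dd/(s0* s0)))^2"
    using assms by (simp add: field_simps power2_eq_square)
  finally show ?thesis .
qed

lemma sum_delta2:
  fixes f :: "'n::finite \<Rightarrow> 'n \<Rightarrow> real"
  shows "(\<Sum>i\<in>UNIV. \<Sum>j\<in>UNIV. f i j * (if i = k \<and> j = k then c else 0)) = f k k * c"
proof -
  have "(\<Sum>i\<in>UNIV. \<Sum>j\<in>UNIV. f i j * (if i = k \<and> j = k then c else 0))
      = (\<Sum>i\<in>UNIV. if i = k then f k k * c else 0)"
    by (intro sum.cong refl) (auto simp: if_distrib cong: if_cong)
  then show ?thesis by simp
qed

lemma sum_delta2':
  fixes f :: "'n::finite \<Rightarrow> 'n \<Rightarrow> real"
  shows "(\<Sum>i\<in>UNIV. \<Sum>j\<in>UNIV. f i j * (if i = k then c else 0) * (if j = k then c else 0)) = f k k * (c * c)"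
proof -
  have "(\<Sum>i\<in>UNIV. \<Sum>j\<in>UNIV. f i j * (if i = k then c else 0) * (if j = k then c else 0))
      = (\<Sum>i\<in>UNIV. if i = k then f k k * (c * c) else 0)"
    by (intro sum.cong refl) (auto simp: if_distrib cong: if_cong)
  then show ?thesis by simp
qed

lemma interior_upper:
  fixes S :: "(real^'n) set"
  assumes "x \<in> interior S" "\<And>y. y \<in> S \<Longrightarrow> y $ k \<le> c"
  shows "x $ k < c"
proof -
  obtain e where e: "e > 0" "ball x e \<subseteq> S" using assms(1) mem_interior by blast
  define y where "y = x + (e/2) *\<^sub>R axis k 1"
  have "dist x y < e" using e by (simp add: y_def dist_norm norm_axis_1)
  then have "y \<in> S" using e by auto
  then have "y $ k \<le> c" using assms(2) by blast
  then show ?thesis using e by (simp add: y_def)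
qed

lemma interior_lower:
  fixes S :: "(real^'n) set"
  assumes "x \<in> interior S" "\<And>y. y \<in> S \<Longrightarrow> c \<le> y $ k"
  shows "c < x $ k"
proof -
  obtain e where e: "e > 0" "ball x e \<subseteq> S" using assms(1) mem_interior by blast
  define y where "y = x - (e/2) *\<^sub>R axis k 1"
  have "dist x y < e" using e by (simp add: y_def dist_norm norm_axis_1)
  then have "y \<in> S" using e by auto
  then have "c \<le> y $ k" using assms(2) by blast
  then show ?thesis using e by (simp add: y_def)
qed

lemma SUP_max_eq:
  fixes f :: "'a \<Rightarrow> real"
  assumes "x0 \<in> S" "\<And>y. y \<in> S \<Longrightarrow> f y \<le> f x0"
  shows "(SUP y\<in>S. f y) = f x0"
  using assms by (intro cSup_eq_maximum) auto



theorem mainTheorem5: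
  fixes F b :: "real^'n^'n \<Rightarrow> real^'n \<Rightarrow> real"
    and u :: "real^'n \<Rightarrow> real"
    and lo hi :: "real^'n" and k :: 'n and r :: real
  assumes F_lip: "lipschitz_Sym F"
    and F_ell: "degenerate_elliptic F"
    and F_smooth: "smooth_strictly_elliptic_along_solutions F"
    and jac: "has_jacobi_inequality F b"
    and u_smooth: "\<exists>U. open U \<and> cball 0 1 \<subseteq> U \<and> Cinf_on U u"
    and u_sol: "\<forall>x\<in>ball 0 1. F (hess u x) (grad u x) = 0"
    and lohi: "\<forall>i. lo $ i < hi $ i"
    and box: "{x. \<forall>i. lo $ i \<le> x $ i \<and> x $ i \<le> hi $ i} \<subseteq> ball 0 1"
    and r: "0 < r" "r < hi $ k - lo $ k"
  shows "let B' = {x. lo $ k \<le> x $ k \<and> x $ k \<le> hi $ k - r \<and>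
                     (\<forall>i. i \<noteq> k \<longrightarrow> lo $ i \<le> x $ i \<and> x $ i \<le> hi $ i)};
             L0 = rel_interior ({x. x $ k = lo $ k} \<inter> B');
             R = frontier B' - L0;
             bx = (\<lambda>x. b (hess u x) (grad u x));
             \<eta> = (\<lambda>t. 1 / (hi $ k - t) - 1 / (hi $ k - lo $ k))
         in (SUP x\<in>B'. \<eta> (x $ k) * bx x) = (SUP x\<in>frontier B'. \<eta> (x $ k) * bx x)
          \<and> (SUP x\<in>frontier B'. \<eta> (x $ k) * bx x) \<le> (1 / r) * (SUP x\<in>R. bx x)"
proof -
  obtain U where U: "open U" "cball 0 1 \<subseteq> U" "Cinf_on U u" using u_smooth by blast
  have C2: "Ck_on 2 U u" using U(3) unfolding Cinf_on_def by blast
  have ballU: "ball 0 1 \<subseteq> U" using U(2) ball_subset_cball by blast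
  have sol: "smooth_solution F (ball 0 1) u"
    unfolding smooth_solution_def Cinf_on_def
    using U(3) ballU u_sol Ck_on_subset unfolding Cinf_on_def by blast
  have Apos: "\<And>x. x \<in> ball 0 1 \<Longrightarrow> posdef (Fder F (hess u x) (grad u x))"
    using F_smooth sol unfolding smooth_strictly_elliptic_along_solutions_def by blast
  have visc: "jacobi_visc (\<lambda>x. Fder F (hess u x) (grad u x)) (\<lambda>x. b (hess u x) (grad u x)) (ball 0 1)"
    using jac sol unfolding has_jacobi_inequality_def by blast
  obtain C where C: "lipschitz_on C ({M. sym_mat M} \<times> UNIV) (\<lambda>z. b (fst z) (snd z))"
    using jac unfolding has_jacobi_inequality_def lipschitz_Sym_def by blast
  have bposM: "\<And>M p. sym_mat M \<Longrightarrow> b M p > 0" using jac unfolding has_jacobi_inequality_def by blast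
  define bx where "bx = (\<lambda>x. b (hess u x) (grad u x))"
  have symU: "\<And>x. x \<in> U \<Longrightarrow> sym_mat (hess u x)" using hess_sym[OF U(1) C2] .
  have bpos: "\<And>x. x \<in> U \<Longrightarrow> bx x > 0" unfolding bx_def using symU bposM by blast
  have bcont: "continuous_on U bx"
  proof -
    have "continuous_on ({M. sym_mat M} \<times> UNIV) (\<lambda>z. b (fst z) (snd z))"
      using lipschitz_on_continuous_on[OF C] .
    moreover have "continuous_on U (\<lambda>x. (hess u x, grad u x))"
      using hess_grad_cont[OF U(1) C2] by (intro continuous_on_Pair)
    moreover have "(\<lambda>x. (hess u x, grad u x)) ` U \<subseteq> {M. sym_mat M} \<times> UNIV" using symU by auto
    ultimately have "continuous_on U (\<lambda>x. (\<lambda>z. b (fst z) (snd z)) (hess u x, grad u x))"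
      by (rule continuous_on_compose2)
    then show ?thesis unfolding bx_def by simp
  qed
  define D where "D = hi$k - lo$k"
  define B' where "B' = {x. lo $ k \<le> x $ k \<and> x $ k \<le> hi $ k - r \<and>
                     (\<forall>i. i \<noteq> k \<longrightarrow> lo $ i \<le> x $ i \<and> x $ i \<le> hi $ i)}"
  define L0 where "L0 = rel_interior ({x. x $ k = lo $ k} \<inter> B')"
  define R where "R = frontier B' - L0"
  define \<eta> where "\<eta> = (\<lambda>t. 1 / (hi $ k - t) - 1 / (hi $ k - lo $ k))"
  define w where "w = (\<lambda>x. \<eta> (x $ k) * bx x)"
  have Bup: "\<And>y. y \<in> B' \<Longrightarrow> y $ k \<le> hi$k - r" and Blo: "\<And>y. y \<in> B' \<Longrightarrow> lo$k \<le> y$k"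
    unfolding B'_def by auto
  have B'box: "B' \<subseteq> ball 0 1"
  proof
    fix x assume xB: "x \<in> B'"
    have "lo $ i \<le> x $ i \<and> x $ i \<le> hi $ i" for i
    proof (cases "i = k")
      case True then show ?thesis using Bup[OF xB] Blo[OF xB] r by auto
    next
      case False then show ?thesis using xB unfolding B'_def by auto
    qed
    then show "x \<in> ball 0 1" using box by blast
  qed
  have B'U: "B' \<subseteq> U" using B'box ballU by blast
  have closedB: "closed B'" unfolding B'_def
    by (intro closed_Collect_conj closed_Collect_all closed_Collect_imp closed_Collect_le
        continuous_intros) (auto intro: open_Collect_neg)
  have compB: "compact B'" using closedB B'box
    by (metis bounded_ball bounded_subset compact_eq_bounded_closed)
  define y0 where "y0 = (\<chi> i. if i = k then hi$k - r else lo$i)"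
  have y0B: "y0 \<in> B'" unfolding y0_def B'_def using r lohi by (auto simp: less_imp_le)
  have Bne: "B' \<noteq> {}" using y0B by blast
  have frB: "frontier B' \<subseteq> B'" using closedB by (simp add: frontier_subset_closed)
  have int_lo: "lo$k < x$k" if "x \<in> interior B'" for x
    using interior_lower[OF that Blo] by blast
  have y0fr: "y0 \<in> frontier B'"
  proof -
    have "y0 \<notin> interior B'"
    proof
      assume "y0 \<in> interior B'"
      from interior_upper[OF this Bup] show False by (simp add: y0_def)
    qed
    then show ?thesis using y0B closedB unfolding frontier_def by (simp add: closure_closed)
  qed
  have L0sub: "L0 \<subseteq> {x. x $ k = lo $ k}" unfolding L0_def using rel_interior_subset by blast
  have y0R: "y0 \<in> R" unfolding R_def using y0fr L0sub r by (auto simp: y0_def)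
  have nz: "\<forall>x\<in>B'. hi $ k - x $ k \<noteq> 0" 
  proof
    fix x assume "x \<in> B'"
    then have "x$k \<le> hi$k - r" by (rule Bup)
    then show "hi$k - x$k \<noteq> 0" using r by simp
  qed
  have wcont: "continuous_on B' w"
    unfolding w_def \<eta>_def using continuous_on_subset[OF bcont B'U] nz
    by (intro continuous_intros) auto
  obtain x0 where x0: "x0 \<in> B'" "\<And>y. y \<in> B' \<Longrightarrow> w y \<le> w x0"
    using continuous_attains_sup[OF compB Bne wcont] by blast
  have eta_s: "\<eta> (lo$k + s) = s / (D * (D - s))" if "0 < s" "s < D" for s
    using that unfolding \<eta>_def D_def by (simp add: field_simps)
  have x0fr: "x0 \<in> frontier B'"
  proof (rule ccontr)
    assume "x0 \<notin> frontier B'"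
    then have x0i: "x0 \<in> interior B'" using x0(1) closedB unfolding frontier_def
      by (simp add: closure_closed)
    define t0 where "t0 = x0$k"
    define s0 where "s0 = t0 - lo$k"
    have s0: "0 < s0" "s0 < D" using int_lo[OF x0i] Bup[OF x0(1)] r unfolding s0_def t0_def D_def by auto
    have Dpos: "D > 0" using s0 by simp
    define b0 where "b0 = bx x0"
    have x0ball: "x0 \<in> ball 0 1" using x0(1) B'box by blast
    have b0: "b0 > 0" using bpos x0(1) B'U unfolding b0_def by blast
    define M where "M = w x0"
    have "\<eta> t0 = s0 / (D * (D - s0))" using eta_s[OF s0] unfolding s0_def by simp
    then have Mdef: "M = s0 / (D * (D - s0)) * b0" unfolding M_def w_def b0_def t0_def by simp
    have Mpos: "M > 0" unfolding Mdef using s0 b0 by simp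
    have b0eq: "b0 = M*D*(D-s0)/s0" unfolding Mdef using s0 by (simp add: field_simps)
    define al where "al = M*D*(D-s0)/s0"
    define be where "be = -(M*D*D/(s0 * s0))"
    define ga where "ga = (2*D+s0)*M*D/(2 * s0^3)"
    define \<phi> where "\<phi> = (\<lambda>x::real^'n. al + be * (x $ k - t0) + ga * ((x $ k - t0) * (x $ k - t0)))"
    define N where "N = interior B' \<inter> {x. 2*D * s0 < (2*D+s0)*(x$k - lo$k)}"
    have Nopen: "open N" unfolding N_def
      by (intro open_Int open_interior open_Collect_less continuous_intros)
    have x0N: "x0 \<in> N"
    proof -
      have "2*D * s0 < (2*D+s0) * s0" using s0 by (simp add: algebra_simps)
      then show ?thesis using x0i unfolding N_def s0_def t0_def by simp
    qed
    have Nsub: "N \<subseteq> ball 0 1" using interior_subset B'box unfolding N_def by blast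
    have le: "bx x \<le> \<phi> x" if xN: "x \<in> N" for x
    proof -
      define s where "s = x$k - lo$k"
      have xB: "x \<in> B'" using xN interior_subset unfolding N_def by blast
      have s3: "2*D * s0 < (2*D+s0) * s" using xN unfolding N_def s_def by simp
      have "(2*D+s0) * s > 0" using s3 Dpos s0 by (smt (verit) mult_pos_pos)
      then have spos: "0 < s" using Dpos s0 by (smt (verit) zero_less_mult_pos)
      have sD: "s < D" using Bup[OF xB] r unfolding s_def D_def by simp
      have "\<eta> (x$k) = s / (D * (D - s))" using eta_s[OF spos sD] unfolding s_def by simp
      moreover have "\<eta> (x$k) * bx x \<le> M" using x0(2)[OF xB] unfolding M_def w_def by simp
      ultimately have "s / (D * (D - s)) * bx x \<le> M" by simp
      then have "bx x \<le> M*D*(D-s)/s" using spos sD Dpos by (simp add: field_simps)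
      also have "\<dots> \<le> al + be * (s - s0) + ga * ((s - s0) * (s - s0))"
        unfolding al_def be_def ga_def using key1[OF s0 Mpos spos] s3 by simp
      also have "\<dots> = \<phi> x" unfolding \<phi>_def s_def s0_def by simp
      finally show ?thesis .
    qed
    have \<phi>x0: "\<phi> x0 = bx x0" unfolding \<phi>_def t0_def using b0eq unfolding al_def b0_def by simp
    have Ck: "Ck_on 2 N \<phi>" unfolding \<phi>_def by (rule quad_facts(1))
    have ineq: "(\<Sum>i\<in>UNIV. \<Sum>j\<in>UNIV. Fder F (hess u x0) (grad u x0) $ i $ j * hess \<phi> x0 $ i $ j)
          \<ge> 2 * (\<Sum>i\<in>UNIV. \<Sum>j\<in>UNIV. Fder F (hess u x0) (grad u x0) $ i $ j * grad \<phi> x0 $ i * grad \<phi> x0 $ j) / bx x0"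
      using visc x0ball Nopen x0N Nsub Ck le \<phi>x0 unfolding jacobi_visc_def bx_def by blast
    define A where "A = Fder F (hess u x0) (grad u x0)"
    have Akk: "A $ k $ k > 0" unfolding A_def using posdef_diag Apos[OF x0ball] by blast
    have gr: "grad \<phi> x0 = (\<chi> i. if i = k then be else 0)"
      unfolding \<phi>_def quad_facts(2) t0_def by (simp add: vec_eq_iff)
    have hs: "hess \<phi> x0 = (\<chi> i j. if i = k \<and> j = k then 2 * ga else 0)"
      unfolding \<phi>_def quad_facts(3) by simp
    have "A $ k $ k * (2 * ga) \<ge> 2 * (A $ k $ k * (be * be)) / b0"
      using ineq unfolding gr hs A_def[symmetric] b0_def[symmetric]
      by (simp add: sum_delta2 sum_delta2')
    then have "A $ k $ k * (2 * ga) * b0 \<ge> 2 * (A $ k $ k * (be * be))"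
      using b0 by (simp add: field_simps)
    then have "ga * b0 \<ge> be * be" using Akk by (simp add: algebra_simps)
    moreover have "ga * al < be^2" unfolding ga_def al_def be_def using key2[OF s0 Mpos] .
    ultimately show False using b0eq unfolding al_def by (simp add: power2_eq_square)
  qed
  have sup1: "(SUP x\<in>B'. w x) = w x0" using x0 by (intro SUP_max_eq[of x0 _ w]) auto
  have sup2: "(SUP x\<in>frontier B'. w x) = w x0" using frB by (intro SUP_max_eq[of x0 _ w] x0fr) (auto intro: x0(2))
  have RB: "R \<subseteq> B'" unfolding R_def using frB by blast
  have bddR: "bdd_above (bx ` R)"
  proof -
    have "compact (bx ` B')" using compact_continuous_image[OF continuous_on_subset[OF bcont B'U] compB] .
    then have "bdd_above (bx ` B')" by (meson bounded_imp_bdd_above compact_imp_bounded)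
    then show ?thesis using RB by (meson bdd_above_mono image_mono)
  qed
  have supR_pos: "(SUP x\<in>R. bx x) > 0"
    using cSUP_upper[OF y0R bddR] bpos[of y0] y0B B'U by force
  have part2: "(SUP x\<in>frontier B'. w x) \<le> (1/r) * (SUP x\<in>R. bx x)"
  proof (rule cSUP_least)
    show "frontier B' \<noteq> {}" using y0fr by blast
    fix x assume xf: "x \<in> frontier B'"
    then have xB: "x \<in> B'" using frB by blast
    show "w x \<le> (1/r) * (SUP x\<in>R. bx x)"
    proof (cases "x \<in> L0")
      case True
      then have "x $ k = lo $ k" using L0sub by blast
      then have "w x = 0" unfolding w_def \<eta>_def by simp
      then show ?thesis using supR_pos r by simp
    next
      case False
      then have xR: "x \<in> R" unfolding R_def using xf by blast
      have bxp: "bx x > 0" using bpos xB B'U by blast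
      have "hi $ k - x $ k \<ge> r" using Bup[OF xB] by simp
      then have "1 / (hi $ k - x $ k) \<le> 1 / r" using r by (simp add: frac_le)
      moreover have "1 / (hi $ k - lo $ k) > 0" using lohi by simp
      ultimately have "\<eta> (x $ k) \<le> 1 / r" unfolding \<eta>_def by linarith
      then have "w x \<le> (1/r) * bx x" unfolding w_def using bxp mult_right_mono[of "\<eta> (x $ k)" "1/r" "bx x"] by simp
      also have "\<dots> \<le> (1/r) * (SUP x\<in>R. bx x)"
        using cSUP_upper[OF xR bddR] r by (simp add: divide_right_mono)
      finally show ?thesis .
    qed
  qed
  show ?thesis unfolding Let_def using sup1 sup2 part2
    unfolding B'_def L0_def R_def \<eta>_def w_def bx_def by simp
qed


end
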